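(* Let $Y$ be a topological space and let $f\colon[0,1]\to Y$ be a function whose graph $\{(x,f(x))\colon x\in[0,1]\}$, with the subspace topology inherited from the product $[0,1]\times Y$, is connected and locally connected. Then $f$ is continuous.
   Context: $[0,1]$ carries its usual Euclidean topology. *)

theory Defs
  imports "HOL-Analysis.Analysis"
begin

end

theory Submission
  imports Defs
begin

theorem mainTheorem4:
  fixes Y :: "'b topology" and f :: "real \<Rightarrow> 'b"
  assumes "f \<in> {0..1} \<rightarrow> topspace Y"
    and "connected_space (subtopology (prod_topology (top_of_set {0..1::real}) Y)
                           ((\<lambda>x. (x, f x)) ` {0..1}))"
    and "locally_connected_space (subtopology (prod_topology (top_of_set {0..1::real}) Y)
                           ((\<lambda>x. (x, f x)) ` {0..1}))"
  shows "continuous_map (top_of_set {0..1::real}) Y f"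
proof -
  define G where "G = (\<lambda>x. (x, f x)) ` {0..1::real}"
  define X where "X = subtopology (prod_topology (top_of_set {0..1::real}) Y) G"
  have GT: "G \<subseteq> {0..1} \<times> topspace Y" using assms(1) by (auto simp: G_def)
  have tX: "topspace X = G" using GT by (auto simp: X_def)
  have conn: "connected_space X" using assms(2) by (simp add: X_def G_def)
  have lc: "locally_connected_space X" using assms(3) by (simp add: X_def G_def)
  have cfst: "continuous_map X (top_of_set {0..1}) fst"
    unfolding X_def by (intro continuous_map_from_subtopology continuous_map_fst)
  have cfstE: "continuous_map X euclidean fst"
    using cfst continuous_map_into_fulltopology by blast
  show ?thesis
    unfolding continuous_map_openin_preimage_eq
  proof (intro conjI allI impI)
    show "f \<in> topspace (top_of_set {0..1}) \<rightarrow> topspace Y" using assms(1) by simp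
    fix V assume V: "openin Y V"
    show "openin (top_of_set {0..1}) (topspace (top_of_set {0..1}) \<inter> f -` V)"
      unfolding openin_subopen[of _ "topspace (top_of_set {0..1}) \<inter> f -` V"]
    proof
      fix x0 assume "x0 \<in> topspace (top_of_set {0..1::real}) \<inter> f -` V"
      then have x0: "0 \<le> x0" "x0 \<le> 1" "f x0 \<in> V" by auto
      have "openin (prod_topology (top_of_set {0..1::real}) Y) ({0..1} \<times> V)"
        using V by (simp add: openin_prod_Times_iff)
      then have Wo: "openin X (G \<inter> ({0..1} \<times> V))"
        unfolding X_def by (metis inf_commute openin_subtopology_Int2)
      have P0: "(x0, f x0) \<in> G \<inter> ({0..1} \<times> V)" using x0 by (auto simp: G_def)
      obtain U where U: "openin X U" "connectedin X U" "(x0, f x0) \<in> U"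
          "U \<subseteq> G \<inter> ({0..1} \<times> V)"
        using lc Wo P0 unfolding locally_connected_space_alt neighbourhood_base_of by blast
      define I where "I = fst ` U"
      have "connectedin euclidean I"
        unfolding I_def by (rule connectedin_continuous_map_image[OF cfstE U(2)])
      then have Iint: "is_interval I" by (simp add: is_interval_connected_1)
      have x0I: "x0 \<in> I" using U(3) unfolding I_def by force
      have IsubP: "I \<subseteq> topspace (top_of_set {0..1}) \<inter> f -` V"
        using U(4) unfolding I_def G_def by auto
      have Ufst: "\<And>z. z \<in> U \<Longrightarrow> z = (fst z, f (fst z))"
        using U(4) unfolding G_def by auto
      have fstG: "\<And>z y. z \<in> G \<Longrightarrow> y \<in> G \<Longrightarrow> fst z = fst y \<Longrightarrow> z = y"
        unfolding G_def by auto
      have g1: "(1, f 1) \<in> G" "(0, f 0) \<in> G" unfolding G_def by auto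
      have right: "x0 = 1 \<or> (\<exists>b\<in>I. x0 < b)"
      proof (rule ccontr)
        assume "\<not> ?thesis"
        then have x1: "x0 < 1" and Ile: "\<forall>b\<in>I. b \<le> x0" using x0 by auto
        define S where "S = {z \<in> topspace X. fst z \<in> {..x0}}"
        have cl: "closedin X S" unfolding S_def
          by (rule closedin_continuous_map_preimage[OF cfstE]) simp
        have eq: "S = {z \<in> topspace X. fst z \<in> {..<x0}} \<union> U"
        proof
          show "S \<subseteq> {z \<in> topspace X. fst z \<in> {..<x0}} \<union> U"
          proof
            fix z assume z: "z \<in> S"
            show "z \<in> {z \<in> topspace X. fst z \<in> {..<x0}} \<union> U"
            proof (cases "fst z = x0")
              case True
              have "(x0, f x0) \<in> G" using P0 by auto
              then have "z = (x0, f x0)" using fstG[of z "(x0, f x0)"] z True tX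
                unfolding S_def by auto
              then show ?thesis using U(3) by auto
            qed (use z in \<open>auto simp: S_def\<close>)
          qed
          show "{z \<in> topspace X. fst z \<in> {..<x0}} \<union> U \<subseteq> S"
            using Ile U(4) tX unfolding S_def I_def by auto
        qed
        have op: "openin X S" unfolding eq
          by (intro openin_Un U(1) openin_continuous_map_preimage[OF cfstE]) simp
        have "S = {} \<or> S = topspace X" using conn cl op connected_space_clopen_in by blast
        moreover have "(x0, f x0) \<in> S" using P0 tX unfolding S_def by auto
        moreover have "(1, f 1) \<notin> S" using x1 unfolding S_def by auto
        ultimately show False using g1 tX by auto
      qed
      have left: "x0 = 0 \<or> (\<exists>a\<in>I. a < x0)"
      proof (rule ccontr)
        assume "\<not> ?thesis"
        then have x1: "0 < x0" and Ile: "\<forall>b\<in>I. x0 \<le> b" using x0 by auto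
        define S where "S = {z \<in> topspace X. fst z \<in> {x0..}}"
        have cl: "closedin X S" unfolding S_def
          by (rule closedin_continuous_map_preimage[OF cfstE]) simp
        have eq: "S = {z \<in> topspace X. fst z \<in> {x0<..}} \<union> U"
        proof
          show "S \<subseteq> {z \<in> topspace X. fst z \<in> {x0<..}} \<union> U"
          proof
            fix z assume z: "z \<in> S"
            show "z \<in> {z \<in> topspace X. fst z \<in> {x0<..}} \<union> U"
            proof (cases "fst z = x0")
              case True
              have "(x0, f x0) \<in> G" using P0 by auto
              then have "z = (x0, f x0)" using fstG[of z "(x0, f x0)"] z True tX
                unfolding S_def by auto
              then show ?thesis using U(3) by auto
            qed (use z in \<open>auto simp: S_def\<close>)
          qed
          show "{z \<in> topspace X. fst z \<in> {x0<..}} \<union> U \<subseteq> S"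
            using Ile U(4) tX unfolding S_def I_def by auto
        qed
        have op: "openin X S" unfolding eq
          by (intro openin_Un U(1) openin_continuous_map_preimage[OF cfstE]) simp
        have "S = {} \<or> S = topspace X" using conn cl op connected_space_clopen_in by blast
        moreover have "(x0, f x0) \<in> S" using P0 tX unfolding S_def by auto
        moreover have "(0, f 0) \<notin> S" using x1 unfolding S_def by auto
        ultimately show False using g1 tX by auto
      qed
      obtain a where a: "a < x0" "x0 = 0 \<or> a \<in> I"
        using left by (metis lt_ex)
      obtain b where b: "x0 < b" "x0 = 1 \<or> b \<in> I"
        using right by (metis gt_ex)
      define T where "T = {0..1::real} \<inter> {a<..<b}"
      have "openin (top_of_set {0..1}) T" unfolding T_def
        by (simp add: openin_open_Int)
      moreover have "x0 \<in> T" using x0 a b by (auto simp: T_def)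
      moreover have "T \<subseteq> I"
      proof
        fix t assume t: "t \<in> T"
        show "t \<in> I"
        proof (cases "t \<le> x0")
          case True
          show ?thesis
          proof (cases "x0 = 0")
            case True then have "t = x0" using t \<open>t \<le> x0\<close> by (auto simp: T_def)
            then show ?thesis using x0I by simp
          next
            case False
            then have "a \<in> I" using a by auto
            moreover have "a \<le> t" using t by (simp add: T_def)
            ultimately show ?thesis using Iint x0I True
              unfolding is_interval_1 by blast
          qed
        next
          case False
          show ?thesis
          proof (cases "x0 = 1")
            case True then have "t = x0" using t False by (auto simp: T_def)
            then show ?thesis using x0I by simp
          next
            case F: False
            then have "b \<in> I" using b by auto
            moreover have "t \<le> b" using t by (simp add: T_def)
            ultimately show ?thesis using Iint x0I False
              unfolding is_interval_1 by (meson linear)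
          qed
        qed
      qed
      ultimately show "\<exists>T. openin (top_of_set {0..1}) T \<and> x0 \<in> T \<and>
               T \<subseteq> topspace (top_of_set {0..1}) \<inter> f -` V"
        using IsubP by blast
    qed
  qed
qed

end
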